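(* Let $l$ be a prime, $\tilde\chi$ a Dirichlet character modulo $l$ with associated character $\chi$, and $f\in S_2^k(\Gamma_0^{(2)}(l),\chi)$. Let $s$ be a symmetric positive definite integral $2\times2$ matrix with $l'=\det(s)$, and let $\hat l$ be an integer with $l\hat l\equiv 1\pmod{l'}$. Let $W_{l'}=\begin{pmatrix}l'&-\hat l\\ ll'&1-l\hat l\end{pmatrix}$. Then \[\phi_s^*(f)\,|\,W_{l'}=\chi\bigl(\det((1-l\hat l)s^{-1})\bigr)\,\phi_s^*f.\]
   Context: $\Gamma_0^{(2)}(l)=\{\begin{pmatrix}A&B\\C&D\end{pmatrix}\in \mathrm{Sp}_4(\mathbb{Z}) : C\equiv 0 \pmod l\}$; for $M=\begin{pmatrix}A&B\\C&D\end{pmatrix}$, $F|_kM(Z)=\det(CZ+D)^{-k}F((AZ+B)(CZ+D)^{-1})$ on the genus 2 Siegel upper half space; $\chi(M)=\tilde\chi(\det D)$, and for an integer $n$ (here $\det((1-l\hat l)s^{-1})=(1-l\hat l)^2/l'$, an integer) $\chi(n)=\tilde\chi(n)$. $S_2^k(\Gamma_0^{(2)}(l),\chi)$ is the space of Siegel cusp forms of degree 2, weight $k$ with $f|_kM=\chi(M)f$ for all $M\in\Gamma_0^{(2)}(l)$. The restriction is $\phi_s^*(f)(\tau)=f(s\tau)$, an elliptic cusp form of weight $2k$ and level $ll'$. For $\gamma=\begin{pmatrix}a&b\\c&d\end{pmatrix}\in\mathrm{GL}_2^+(\mathbb{Q})$, $(g|\gamma)(\tau)=\det(\gamma)^k(c\tau+d)^{-2k}g(\gamma\tau)$.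 *)

theory Defs
  imports "HOL-Analysis.Analysis" "HOL-Number_Theory.Cong"
begin

definition cmat :: "int^2^2 \<Rightarrow> complex^2^2" where
  "cmat A = (\<chi> i j. of_int (A$i$j))"

definition rmat :: "int^2^2 \<Rightarrow> real^2^2" where
  "rmat A = (\<chi> i j. of_int (A$i$j))"

definition pos_def_real :: "real^2^2 \<Rightarrow> bool" where
  "pos_def_real S \<longleftrightarrow> transpose S = S \<and> (\<forall>x. x \<noteq> 0 \<longrightarrow> x \<bullet> (S *v x) > 0)"

definition Im_mat :: "complex^2^2 \<Rightarrow> real^2^2" where
  "Im_mat Z = (\<chi> i j. Im (Z$i$j))"

definition siegel_H2 :: "(complex^2^2) set" where
  "siegel_H2 = {Z. transpose Z = Z \<and> pos_def_real (Im_mat Z)}"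

definition sym_mat :: "complex \<Rightarrow> complex \<Rightarrow> complex \<Rightarrow> complex^2^2" where
  "sym_mat a b c = vector [vector [a, b], vector [b, c]]"

text \<open>Elements of Sp_4(Z) as block quadruples (A,B,C,D); the conditions are
  M^T J M = J written out in blocks.\<close>
definition sp4Z :: "((int^2^2) \<times> (int^2^2) \<times> (int^2^2) \<times> (int^2^2)) set" where
  "sp4Z = {(A,B,C,D). transpose A ** C = transpose C ** A \<and>
                      transpose B ** D = transpose D ** B \<and>
                      transpose A ** D - transpose C ** B = mat 1}"

definition Gamma0_2 :: "int \<Rightarrow> ((int^2^2) \<times> (int^2^2) \<times> (int^2^2) \<times> (int^2^2)) set" where
  "Gamma0_2 l = {(A,B,C,D) \<in> sp4Z. \<forall>i j. l dvd C$i$j}"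

definition slash2 :: "nat \<Rightarrow> (int^2^2) \<times> (int^2^2) \<times> (int^2^2) \<times> (int^2^2)
     \<Rightarrow> (complex^2^2 \<Rightarrow> complex) \<Rightarrow> complex^2^2 \<Rightarrow> complex" where
  "slash2 k M F Z = (case M of (A,B,C,D) \<Rightarrow>
     inverse (det (cmat C ** Z + cmat D) ^ k) *
     F ((cmat A ** Z + cmat B) ** matrix_inv (cmat C ** Z + cmat D)))"

definition dirichlet_character :: "int \<Rightarrow> (int \<Rightarrow> complex) \<Rightarrow> bool" where
  "dirichlet_character m chi \<longleftrightarrow>
     (\<forall>n. chi (n + m) = chi n) \<and> (\<forall>a b. chi (a * b) = chi a * chi b) \<and>
     chi 1 = 1 \<and> (\<forall>n. chi n = 0 \<longleftrightarrow> \<not> coprime n m)"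

text \<open>Holomorphy on H_2 in the coordinates (z11, z12, z22): continuity plus
  holomorphy in each variable separately (equivalent by Osgood's lemma).\<close>
definition siegel_holomorphic :: "(complex^2^2 \<Rightarrow> complex) \<Rightarrow> bool" where
  "siegel_holomorphic F \<longleftrightarrow>
     continuous_on {(a,b,c). sym_mat a b c \<in> siegel_H2} (\<lambda>(a,b,c). F (sym_mat a b c)) \<and>
     (\<forall>a b c. sym_mat a b c \<in> siegel_H2 \<longrightarrow>
        (\<lambda>z. F (sym_mat z b c)) field_differentiable at a \<and>
        (\<lambda>z. F (sym_mat a z c)) field_differentiable at b \<and>
        (\<lambda>z. F (sym_mat a b z)) field_differentiable at c)"

text \<open>S_2^k(Gamma_0^(2)(l), chi): holomorphic, transformation law with
  chi(M) = tchi(det D), and cuspidal: Siegel's Phi operator kills F|_k M for every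
  M in Sp_4(Z).\<close>
definition siegel_cusp_forms :: "nat \<Rightarrow> int \<Rightarrow> (int \<Rightarrow> complex) \<Rightarrow> (complex^2^2 \<Rightarrow> complex) set" where
  "siegel_cusp_forms k l tchi = {F.
     siegel_holomorphic F \<and>
     (\<forall>A B C D. (A,B,C,D) \<in> Gamma0_2 l \<longrightarrow>
        (\<forall>Z\<in>siegel_H2. slash2 k (A,B,C,D) F Z = tchi (det D) * F Z)) \<and>
     (\<forall>M\<in>sp4Z. \<forall>\<tau>. Im \<tau> > 0 \<longrightarrow>
        ((\<lambda>t::real. slash2 k M F (sym_mat \<tau> 0 (\<i> * of_real t))) \<longlongrightarrow> 0) at_top)}"

definition phi_s :: "int^2^2 \<Rightarrow> (complex^2^2 \<Rightarrow> complex) \<Rightarrow> complex \<Rightarrow> complex" where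
  "phi_s s F \<tau> = F (\<chi> i j. \<tau> * of_int (s$i$j))"

definition ell_slash :: "nat \<Rightarrow> int \<times> int \<times> int \<times> int \<Rightarrow> (complex \<Rightarrow> complex) \<Rightarrow> complex \<Rightarrow> complex" where
  "ell_slash k \<gamma> g \<tau> = (case \<gamma> of (a,b,c,d) \<Rightarrow>
     of_int (a*d - b*c) ^ k * inverse ((of_int c * \<tau> + of_int d) ^ (2*k)) *
     g ((of_int a * \<tau> + of_int b) / (of_int c * \<tau> + of_int d)))"

end

theory Submission imports Defs begin

definition m2 :: "'a::zero \<Rightarrow> 'a \<Rightarrow> 'a \<Rightarrow> 'a \<Rightarrow> 'a^2^2" where
  "m2 p q r t = vector [vector [p,q], vector [r,t]]"

lemma m2_nth [simp]: "m2 p q r t $ 1 $ 1 = p" "m2 p q r t $ 1 $ 2 = q"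
  "m2 p q r t $ 2 $ 1 = r" "m2 p q r t $ 2 $ 2 = t"
  by (simp_all add: m2_def)

lemma m2_eta: "(M::'a::zero^2^2) = m2 (M$1$1) (M$1$2) (M$2$1) (M$2$2)"
  by (simp add: vec_eq_iff forall_2)

lemma m2_eq: "(m2 p q r t = m2 p' q' r' t') \<longleftrightarrow> p = p' \<and> q = q' \<and> r = r' \<and> t = t'"
  by (simp add: vec_eq_iff forall_2)

lemma m2_mult: "(m2 p q r t :: 'a::semiring_1^2^2) ** m2 p' q' r' t' =
   m2 (p*p' + q*r') (p*q' + q*t') (r*p' + t*r') (r*q' + t*t')"
  by (simp add: vec_eq_iff forall_2 matrix_matrix_mult_def sum_2)

lemma m2_add: "(m2 p q r t :: 'a::monoid_add^2^2) + m2 p' q' r' t' = m2 (p+p') (q+q') (r+r') (t+t')"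
  by (simp add: vec_eq_iff forall_2)

lemma m2_diff: "(m2 p q r t :: 'a::group_add^2^2) - m2 p' q' r' t' = m2 (p-p') (q-q') (r-r') (t-t')"
  by (simp add: vec_eq_iff forall_2)


lemma m2_transpose: "transpose (m2 p q r t) = m2 p r q t"
  by (simp add: vec_eq_iff forall_2 transpose_def)

lemma m2_one: "(mat 1 :: 'a::{zero,one}^2^2) = m2 1 0 0 1"
  by (simp add: vec_eq_iff forall_2 mat_def)

lemma m2_det: "det (m2 p q r t :: 'a::comm_ring_1^2^2) = p*t - q*r"
  by (simp add: det_2)

lemma m2_cmat: "cmat (m2 p q r t) = m2 (of_int p) (of_int q) (of_int r) (of_int t)"
  by (simp add: cmat_def vec_eq_iff forall_2)

lemma quad_m2: "(x::real^2) \<bullet> (m2 p q r t *v x) = x$1*(p*x$1 + q*x$2) + x$2*(r*x$1 + t*x$2)"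
  by (simp add: inner_vec_def sum_2 matrix_vector_mult_def)

theorem proposition4p4:
  fixes l lhat :: int and tchi :: "int \<Rightarrow> complex" and k :: nat
    and F :: "complex^2^2 \<Rightarrow> complex" and s :: "int^2^2"
  assumes "prime l"
    and "dirichlet_character l tchi"
    and "F \<in> siegel_cusp_forms k l tchi"
    and "transpose s = s" and "pos_def_real (rmat s)"
    and "[l * lhat = 1] (mod det s)"
  shows "\<forall>\<tau>. Im \<tau> > 0 \<longrightarrow>
     ell_slash k (det s, - lhat, l * det s, 1 - l * lhat) (phi_s s F) \<tau>
       = tchi ((1 - l * lhat)^2 div det s) * phi_s s F \<tau>"
proof (intro allI impI)
  fix \<tau> :: complex assume tau: "Im \<tau> > 0"
  define a where "a = s$1$1"
  define b where "b = s$1$2"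
  define c where "c = s$2$2"
  have "s$2$1 = transpose s $1$2" by (simp add: transpose_def)
  hence "s$2$1 = b" using assms(4) b_def by simp
  hence s: "s = m2 a b b c" using a_def b_def c_def m2_eta[of s] by simp
  define l' where "l' = det s"
  have l': "l' = a*c - b*b" unfolding l'_def s m2_det by simp
  have l0: "l \<noteq> 0" using assms(1) by auto
  have rs: "rmat s = m2 (real_of_int a) b b c"
    unfolding s by (simp add: rmat_def vec_eq_iff forall_2)
  have apos: "a > 0"
  proof -
    have "(vector [1,0] :: real^2) \<noteq> 0" by (simp add: vec_eq_iff forall_2)
    hence "(vector [1,0] :: real^2) \<bullet> (rmat s *v vector [1,0]) > 0"
      using assms(5) unfolding pos_def_real_def by blast
    thus ?thesis unfolding rs quad_m2 by simp
  qed
  have l'pos: "l' > 0"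
  proof -
    have "(vector [b,-a] :: real^2) \<noteq> 0" using apos by (simp add: vec_eq_iff forall_2)
    hence "(vector [b,-a] :: real^2) \<bullet> (rmat s *v vector [b,-a]) > 0"
      using assms(5) unfolding pos_def_real_def by blast
    hence "real_of_int a * (a*c - b*b) > 0" unfolding rs quad_m2 by (simp add: algebra_simps)
    hence "a * (a*c-b*b) > 0" by (metis of_int_0_less_iff of_int_mult of_int_diff)
    thus ?thesis using apos l' by (simp add: zero_less_mult_iff)
  qed
  have "l' dvd 1 - l*lhat" using assms(6) unfolding l'_def
    by (metis cong_iff_dvd_diff cong_sym)
  then obtain e where e: "1 - l*lhat = l'*e" by (auto elim: dvdE)
  define A where "A = m2 (-b) a (-c) b"
  define B where "B = m2 0 (-lhat) lhat 0"
  define C where "C = m2 0 l (-l) 0"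
  define D where "D = m2 (e*b) (e*c) (-e*a) (-e*b)"
  have G: "(A,B,C,D) \<in> Gamma0_2 l"
    unfolding Gamma0_2_def sp4Z_def A_def B_def C_def D_def
    using e l'
    by (simp add: m2_mult m2_transpose m2_diff m2_add m2_one m2_eq forall_2 algebra_simps)
  have u0: "of_int l * \<tau> + of_int e \<noteq> 0"
  proof
    assume "of_int l * \<tau> + of_int e = 0"
    hence "Im (of_int l * \<tau> + of_int e) = 0" by simp
    thus False using l0 tau by simp
  qed
  define u where "u = of_int l * \<tau> + of_int e"
  define Z :: "complex^2^2" where "Z = (\<chi> i j. \<tau> * of_int (s$i$j))"
  have Zm: "Z = m2 (\<tau> * of_int a) (\<tau> * of_int b) (\<tau> * of_int b) (\<tau> * of_int c)"
    unfolding Z_def s by (simp add: vec_eq_iff forall_2)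
  have ImZ: "Im_mat Z = m2 (Im \<tau> * a) (Im \<tau> * b) (Im \<tau> * b) (Im \<tau> * c)"
    unfolding Zm by (simp add: Im_mat_def vec_eq_iff forall_2)
  have ZH: "Z \<in> siegel_H2"
    unfolding siegel_H2_def pos_def_real_def
  proof (intro CollectI conjI allI impI)
    show "transpose Z = Z" unfolding Zm m2_transpose by simp
    show "transpose (Im_mat Z) = Im_mat Z" unfolding ImZ m2_transpose by simp
    fix x :: "real^2" assume "x \<noteq> 0"
    hence "x \<bullet> (rmat s *v x) > 0" using assms(5) unfolding pos_def_real_def by blast
    hence "0 < Im \<tau> * (x \<bullet> (rmat s *v x))" using tau by simp
    also have "Im \<tau> * (x \<bullet> (rmat s *v x)) = x \<bullet> (Im_mat Z *v x)"
      unfolding ImZ rs quad_m2 by (simp add: algebra_simps)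
    finally show "0 < x \<bullet> (Im_mat Z *v x)" .
  qed
  have slash: "slash2 k (A,B,C,D) F Z = tchi (det D) * F Z"
    using assms(3) G ZH unfolding siegel_cusp_forms_def by blast
  define X where "X = cmat C ** Z + cmat D"
  have Xm: "X = m2 (u * of_int b) (u * of_int c) (- u * of_int a) (- u * of_int b)"
    unfolding X_def C_def D_def Zm u_def m2_cmat m2_mult m2_add m2_eq
    by (simp add: algebra_simps)
  have detX: "det X = of_int l' * u^2"
    unfolding Xm m2_det l' by (simp add: algebra_simps power2_eq_square)
  have detX0: "det X \<noteq> 0" using detX l'pos u0 u_def by simp
  have "invertible X" using detX0 invertible_det_nz by blast
  hence XX: "X ** matrix_inv X = mat 1"
    unfolding invertible_def matrix_inv_def by (rule someI2_ex) auto
  define w where "w = (of_int (det s) * \<tau> + of_int (- lhat)) / (of_int (l * det s) * \<tau> + of_int (1 - l * lhat))"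
  have den: "of_int (l * det s) * \<tau> + of_int (1 - l * lhat) = of_int l' * u"
    unfolding l'_def[symmetric] e u_def by (simp add: algebra_simps)
  have wu: "w * (of_int l' * u) = of_int l' * \<tau> - of_int lhat"
  proof -
    have "w = (of_int l' * \<tau> - of_int lhat) / (of_int l' * u)"
      unfolding w_def den by (simp add: l'_def)
    thus ?thesis using l'pos u0 u_def by simp
  qed
  define T :: "complex^2^2" where "T = (\<chi> i j. w * of_int (s$i$j))"
  have Tm: "T = m2 (w * of_int a) (w * of_int b) (w * of_int b) (w * of_int c)"
    unfolding T_def s by (simp add: vec_eq_iff forall_2)
  have Y: "cmat A ** Z + cmat B = T ** X"
  proof -
    have "cmat A ** Z + cmat B = m2 0 (of_int l' * \<tau> - of_int lhat) (- (of_int l' * \<tau> - of_int lhat)) 0"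
      unfolding A_def B_def Zm m2_cmat m2_mult m2_add m2_eq l' by (simp add: algebra_simps)
    also have "\<dots> = T ** X"
    proof -
      have cl: "(of_int l' :: complex) = of_int a * of_int c - of_int b * of_int b"
        unfolding l' by simp
      show ?thesis unfolding Tm Xm m2_mult m2_eq using wu cl by algebra
    qed
    finally show ?thesis .
  qed
  have FT: "F T = tchi (det D) * (of_int l' * u^2)^k * F Z"
  proof -
    have "inverse (det X ^ k) * F T = tchi (det D) * F Z"
    proof -
      have "(cmat A ** Z + cmat B) ** matrix_inv X = T"
        unfolding Y matrix_mul_assoc[symmetric] XX by (simp add: matrix_mul_rid)
      thus ?thesis using slash unfolding slash2_def prod.case X_def by simp
    qed
    thus ?thesis using detX0 detX by (simp add: field_simps)
  qed
  have detD: "det D = (1 - l * lhat)^2 div det s"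
  proof -
    have "det D = l' * e^2" unfolding D_def m2_det l' by (simp add: algebra_simps power2_eq_square)
    moreover have "(1 - l * lhat)^2 = det s * (l' * e^2)" unfolding e l'_def by (simp add: power2_eq_square)
    ultimately show ?thesis using l'pos l'_def by simp
  qed
  have detW: "det s * (1 - l * lhat) - - lhat * (l * det s) = l'" unfolding l'_def by (simp add: algebra_simps)
  have "ell_slash k (det s, - lhat, l * det s, 1 - l * lhat) (phi_s s F) \<tau>
     = of_int l' ^ k * inverse ((of_int l' * u) ^ (2*k)) * F T"
    unfolding ell_slash_def phi_s_def prod.case w_def[symmetric] T_def[symmetric] unfolding detW den ..
  also have "\<dots> = tchi (det D) * F Z"
  proof -
    have L: "(of_int l' :: complex) \<noteq> 0" using l'pos by simp
    have U: "u \<noteq> 0" using u0 u_def by simp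
    have P: "(of_int l' * u) ^ (2*k) = of_int l' ^ k * (of_int l' * u^2)^k"
      by (simp add: power_mult power_mult_distrib power2_eq_square mult_ac)
    have Q: "(of_int l' * u^2)^k \<noteq> 0" using L U by simp
    show ?thesis unfolding FT P using L Q U by (simp add: field_simps)
  qed
  also have "\<dots> = tchi ((1 - l * lhat)^2 div det s) * phi_s s F \<tau>"
    unfolding detD phi_s_def Z_def ..
  finally show "ell_slash k (det s, - lhat, l * det s, 1 - l * lhat) (phi_s s F) \<tau> = tchi ((1 - l * lhat)^2 div det s) * phi_s s F \<tau>" .
qed

end
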